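(* Let $\phi : A \to B$ be a positive linear map between monotone complete ordered vector spaces $A$ and $B$. Assume that $A$ is a vector lattice admitting some faithful positive linear functional. If $\phi$ is sequentially normal, then $\phi$ is normal.
   Context: An ordered vector space $W$ is monotone complete if every non-empty upward directed subset of $W$ that is bounded above has a supremum in $W$ (in particular every bounded above increasing sequence then has a supremum). A positive linear functional $\psi$ on an ordered vector space $W$ with positive cone $W_+$ is faithful if $\psi(a)>0$ for every $a\in W_+\setminus\{0\}$. A positive linear map $\phi:A\to B$ between monotone complete ordered vector spaces is called normal if $\phi(\sup J)=\sup_{j\in J}\phi(j)$ for every non-empty upper bounded upward directed subset $J$ of $A$, and sequentially normal if $\phi(\sup_n j_n)=\sup_n\phi(j_n)$ for every upper bounded increasing sequence $(j_n)$ in $A$. *)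

theory Defs
  imports Complex_Main
begin

definition ov_upper_bound :: "'a::order set \<Rightarrow> 'a \<Rightarrow> bool" where
  "ov_upper_bound S u \<longleftrightarrow> (\<forall>x\<in>S. x \<le> u)"

definition ov_bdd_above :: "'a::order set \<Rightarrow> bool" where
  "ov_bdd_above S \<longleftrightarrow> (\<exists>u. ov_upper_bound S u)"

definition ov_is_sup :: "'a::order set \<Rightarrow> 'a \<Rightarrow> bool" where
  "ov_is_sup S s \<longleftrightarrow> ov_upper_bound S s \<and> (\<forall>u. ov_upper_bound S u \<longrightarrow> s \<le> u)"

definition upward_directed :: "'a::order set \<Rightarrow> bool" where
  "upward_directed S \<longleftrightarrow> (\<forall>x\<in>S. \<forall>y\<in>S. \<exists>z\<in>S. x \<le> z \<and> y \<le> z)"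

definition monotone_complete :: "'a::ordered_real_vector itself \<Rightarrow> bool" where
  "monotone_complete _ \<longleftrightarrow>
     (\<forall>S::'a set. S \<noteq> {} \<and> upward_directed S \<and> ov_bdd_above S \<longrightarrow> (\<exists>s. ov_is_sup S s))"

definition positive_map :: "('a::ordered_real_vector \<Rightarrow> 'b::ordered_real_vector) \<Rightarrow> bool" where
  "positive_map f \<longleftrightarrow> (\<forall>x. 0 \<le> x \<longrightarrow> 0 \<le> f x)"

definition faithful_functional :: "('a::ordered_real_vector \<Rightarrow> real) \<Rightarrow> bool" where
  "faithful_functional \<psi> \<longleftrightarrow> (\<forall>a. 0 \<le> a \<and> a \<noteq> 0 \<longrightarrow> \<psi> a > 0)"

definition normal_map :: "('a::ordered_real_vector \<Rightarrow> 'b::ordered_real_vector) \<Rightarrow> bool" where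
  "normal_map \<phi> \<longleftrightarrow> (\<forall>J s. J \<noteq> {} \<and> upward_directed J \<and> ov_bdd_above J \<and> ov_is_sup J s
       \<longrightarrow> ov_is_sup (\<phi> ` J) (\<phi> s))"

definition seq_normal_map :: "('a::ordered_real_vector \<Rightarrow> 'b::ordered_real_vector) \<Rightarrow> bool" where
  "seq_normal_map \<phi> \<longleftrightarrow> (\<forall>(j::nat \<Rightarrow> 'a) s. incseq j \<and> ov_bdd_above (range j) \<and> ov_is_sup (range j) s
       \<longrightarrow> ov_is_sup (range (\<phi> \<circ> j)) (\<phi> s))"

end

theory Submission
  imports Defs
begin

lemma pos_mono:
  fixes f :: "'a::ordered_real_vector \<Rightarrow> 'b::ordered_real_vector"
  assumes "linear f" "positive_map f" "x \<le> y"
  shows "f x \<le> f y"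
proof -
  have "0 \<le> f (y - x)" using assms unfolding positive_map_def by simp
  also have "f (y - x) = f y - f x" using assms(1) by (simp add: linear_diff)
  finally show ?thesis by simp
qed

theorem mainTheorem2:
  fixes \<phi> :: "'a::{ordered_real_vector, lattice} \<Rightarrow> 'b::ordered_real_vector"
  assumes "monotone_complete TYPE('a)"
    and "monotone_complete TYPE('b)"
    and "linear \<phi>"
    and "positive_map \<phi>"
    and "\<exists>\<psi> :: 'a \<Rightarrow> real. linear \<psi> \<and> positive_map \<psi> \<and> faithful_functional \<psi>"
    and "seq_normal_map \<phi>"
  shows "normal_map \<phi>"
  unfolding normal_map_def
proof (intro allI impI)
  fix J :: "'a set" and s :: 'a
  assume H: "J \<noteq> {} \<and> upward_directed J \<and> ov_bdd_above J \<and> ov_is_sup J s"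
  hence Jne: "J \<noteq> {}" and dir: "upward_directed J" and sup: "ov_is_sup J s" by auto
  have sJ: "\<And>x. x \<in> J \<Longrightarrow> x \<le> s" using sup unfolding ov_is_sup_def ov_upper_bound_def by auto
  have sleast: "\<And>u. (\<And>x. x \<in> J \<Longrightarrow> x \<le> u) \<Longrightarrow> s \<le> u"
    using sup unfolding ov_is_sup_def ov_upper_bound_def by auto
  obtain \<psi> :: "'a \<Rightarrow> real" where lp: "linear \<psi>" and pp: "positive_map \<psi>" and fp: "faithful_functional \<psi>"
    using assms(5) by blast
  define c where "c = Sup (\<psi> ` J)"
  have bdd: "bdd_above (\<psi> ` J)"
    using sJ pos_mono[OF lp pp] by (intro bdd_aboveI[where M="\<psi> s"]) auto
  have psic: "\<And>x. x \<in> J \<Longrightarrow> \<psi> x \<le> c" unfolding c_def using bdd by (simp add: cSup_upper)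
  have ex: "\<forall>x\<in>J. \<forall>n::nat. \<exists>y\<in>J. x \<le> y \<and> \<psi> y > c - 1 / real (Suc n)"
  proof (intro ballI allI)
    fix x n
    assume xJ: "x \<in> J"
    have "c - 1 / real (Suc n) < Sup (\<psi> ` J)" unfolding c_def by simp
    then obtain z where zJ: "z \<in> J" and z: "c - 1 / real (Suc n) < \<psi> z"
      using less_cSupE[of "c - 1 / real (Suc n)" "\<psi> ` J"] Jne by auto
    obtain y where yJ: "y \<in> J" and "x \<le> y" "z \<le> y" using dir xJ zJ unfolding upward_directed_def by blast
    moreover have "\<psi> z \<le> \<psi> y" using pos_mono[OF lp pp] \<open>z \<le> y\<close> by blast
    ultimately show "\<exists>y\<in>J. x \<le> y \<and> \<psi> y > c - 1 / real (Suc n)" using z by force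
  qed
  then obtain g where g: "\<And>x n. x \<in> J \<Longrightarrow> g x n \<in> J \<and> x \<le> g x n \<and> \<psi> (g x n) > c - 1 / real (Suc n)"
    by metis
  obtain x0 where x0: "x0 \<in> J" using Jne by blast
  define j where "j = rec_nat (g x0 0) (\<lambda>n x. g x (Suc n))"
  have j0: "j 0 = g x0 0" and jS: "\<And>n. j (Suc n) = g (j n) (Suc n)" unfolding j_def by simp_all
  have jprop: "j n \<in> J \<and> \<psi> (j n) > c - 1 / real (Suc n)" for n
  proof (induction n)
    case 0 then show ?case using g[OF x0, of 0] j0 by simp
  next
    case (Suc n) then show ?case using g[of "j n" "Suc n"] jS by simp
  qed
  have inc: "incseq j"
    by (rule incseq_SucI) (use g jprop jS in auto)
  have ubJ: "x \<le> t" if tu: "\<And>n. j n \<le> t" and xJ: "x \<in> J" for t x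
  proof -
    define p where "p = sup (x - t) 0"
    have p0: "0 \<le> p" unfolding p_def by simp
    have small: "\<psi> p < 1 / real (Suc n)" for n
    proof -
      obtain k where kJ: "k \<in> J" and "x \<le> k" "j n \<le> k"
        using dir xJ jprop[of n] unfolding upward_directed_def by blast
      have "x - t \<le> k - j n" using \<open>x \<le> k\<close> tu[of n] by (simp add: diff_mono)
      moreover have "0 \<le> k - j n" using \<open>j n \<le> k\<close> by simp
      ultimately have "p \<le> k - j n" unfolding p_def by simp
      hence "\<psi> p \<le> \<psi> (k - j n)" using pos_mono[OF lp pp] by blast
      also have "\<dots> = \<psi> k - \<psi> (j n)" using lp by (simp add: linear_diff)
      finally show ?thesis using psic[OF kJ] jprop[of n] by linarith
    qed
    have "\<psi> p \<le> 0"
    proof (rule ccontr)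
      assume "\<not> \<psi> p \<le> 0"
      then obtain n where "inverse (real (Suc n)) < \<psi> p" using reals_Archimedean by force
      with small[of n] show False by (simp add: divide_inverse)
    qed
    hence "p = 0" using p0 fp unfolding faithful_functional_def by force
    hence "x - t \<le> 0" unfolding p_def by (metis sup_ge1)
    thus ?thesis by simp
  qed
  have supj: "ov_is_sup (range j) s"
    unfolding ov_is_sup_def ov_upper_bound_def
    using sJ jprop sleast ubJ by auto
  have bj: "ov_bdd_above (range j)" using supj unfolding ov_is_sup_def ov_bdd_above_def by blast
  have phisup: "ov_is_sup (range (\<phi> \<circ> j)) (\<phi> s)"
    using assms(6) inc bj supj unfolding seq_normal_map_def by blast
  show "ov_is_sup (\<phi> ` J) (\<phi> s)"
    unfolding ov_is_sup_def ov_upper_bound_def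
  proof (intro conjI allI impI ballI)
    fix y assume "y \<in> \<phi> ` J"
    then show "y \<le> \<phi> s" using sJ pos_mono[OF assms(3,4)] by auto
  next
    fix u assume "\<forall>x\<in>\<phi> ` J. x \<le> u"
    hence "ov_upper_bound (range (\<phi> \<circ> j)) u" using jprop unfolding ov_upper_bound_def by auto
    thus "\<phi> s \<le> u" using phisup unfolding ov_is_sup_def by blast
  qed
qed

end
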